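(* Let $n,p,d\in\mathbb{N}$ and let $M\subseteq\mathbb{R}^{n+p+d}$ be a closed convex set inducing an MICP formulation of a set $S\subseteq\mathbb{R}^n$. Let $I=\operatorname{proj}_{\mathbf z}(M)$ be its index set and $\{A_{\mathbf z}\}_{\mathbf z\in I}$ its $\mathbf z$-projected sets. Then \[ \big(\operatorname{cl}(A_{\mathbf z})\big)_\infty=\big(\operatorname{cl}(A_{\mathbf z'})\big)_\infty\qquad\text{for all }\mathbf z,\mathbf z'\in\operatorname{relint}(I). \]
   Context: Variables in $\mathbb{R}^{n+p+d}$ are written $(\mathbf x,\mathbf y,\mathbf z)$ with $\mathbf x\in\mathbb{R}^n$, $\mathbf y\in\mathbb{R}^p$, $\mathbf z\in\mathbb{R}^d$; $\operatorname{proj}_{\mathbf x}$, $\operatorname{proj}_{\mathbf z}$ denote the coordinate projections. A closed convex set $M\subseteq\mathbb{R}^{n+p+d}$ induces an MICP formulation of $S\subseteq\mathbb{R}^n$ if: $\mathbf x\in S$ iff there exist $\mathbf y\in\mathbb{R}^p$, $\mathbf z\in\mathbb{Z}^d$ with $(\mathbf x,\mathbf y,\mathbf z)\in M$. The index set of the formulation is $I=\operatorname{proj}_{\mathbf z}(M)$, and for each $\mathbf z\in I$ the $\mathbf z$-projected set is $A_{\mathbf z}=\operatorname{proj}_{\mathbf x}\big(M\cap(\mathbb{R}^{n+p}\times\{\mathbf z\})\big)$. For a convex set $C$, its recession cone is $C_\infty=\{\mathbf r:\ \mathbf x+\lambda\mathbf r\in C\ \forall\mathbf x\in C,\ \forall\lambda\ge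 0\}$. $\operatorname{cl}$ denotes closure and $\operatorname{relint}$ relative interior. *)

theory Defs
  imports "HOL-Analysis.Analysis"
begin

text \<open>Points of R^{n+p+d} are triples (x, y, z) with x :: real^'n, y :: real^'p, z :: real^'d.\<close>

definition integral_vec :: "real^'d \<Rightarrow> bool" where
  "integral_vec z \<longleftrightarrow> (\<forall>i. z $ i \<in> \<int>)"

definition induces_MICP ::
  "((real^'n) \<times> (real^'p) \<times> (real^'d)) set \<Rightarrow> (real^'n) set \<Rightarrow> bool" where
  "induces_MICP M S \<longleftrightarrow> closed M \<and> convex M \<and>
     (\<forall>x. x \<in> S \<longleftrightarrow> (\<exists>y z. integral_vec z \<and> (x, y, z) \<in> M))"

definition index_set ::
  "((real^'n) \<times> (real^'p) \<times> (real^'d)) set \<Rightarrow> (real^'d) set" where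
  "index_set M = (\<lambda>(x, y, z). z) ` M"

definition z_projected ::
  "((real^'n) \<times> (real^'p) \<times> (real^'d)) set \<Rightarrow> real^'d \<Rightarrow> (real^'n) set" where
  "z_projected M z = (\<lambda>(x, y, z'). x) ` (M \<inter> {(x, y, z'). z' = z})"

definition recession_cone :: "'a::real_vector set \<Rightarrow> 'a set" where
  "recession_cone C = {r. \<forall>x\<in>C. \<forall>t::real. t \<ge> 0 \<longrightarrow> x + t *\<^sub>R r \<in> C}"

end

theory Submission
  imports Defs
begin

lemma zproj_iff: "x \<in> z_projected M z \<longleftrightarrow> (\<exists>y. (x, y, z) \<in> M)"
  unfolding z_projected_def by (auto simp: image_iff) (rule bexI[of _ "(x, _, z)"], auto)

lemma index_iff: "z \<in> index_set M \<longleftrightarrow> (\<exists>x y. (x, y, z) \<in> M)"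
  unfolding index_set_def by (auto simp: image_iff) (metis (mono_tags) case_prod_conv)

lemma convex_zproj:
  assumes "convex M" shows "convex (z_projected M z)"
proof (rule convexI)
  fix a b and u v :: real
  assume "a \<in> z_projected M z" "b \<in> z_projected M z" "0 \<le> u" "0 \<le> v" "u + v = 1"
  then obtain ya yb where A: "(a, ya, z) \<in> M" "(b, yb, z) \<in> M" by (auto simp: zproj_iff)
  have "u *\<^sub>R (a, ya, z) + v *\<^sub>R (b, yb, z) \<in> M"
    using convexD[OF assms A] \<open>0 \<le> u\<close> \<open>0 \<le> v\<close> \<open>u + v = 1\<close> by blast
  moreover have "u *\<^sub>R (a, ya, z) + v *\<^sub>R (b, yb, z) = (u *\<^sub>R a + v *\<^sub>R b, u *\<^sub>R ya + v *\<^sub>R yb, z)"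
    using \<open>u + v = 1\<close> by (simp add: scaleR_left_distrib[symmetric])
  ultimately show "u *\<^sub>R a + v *\<^sub>R b \<in> z_projected M z" by (auto simp: zproj_iff)
qed

lemma convex_index:
  assumes "convex M" shows "convex (index_set M)"
proof (rule convexI)
  fix a b and u v :: real
  assume "a \<in> index_set M" "b \<in> index_set M" "0 \<le> u" "0 \<le> v" "u + v = 1"
  then obtain xa ya xb yb where A: "(xa, ya, a) \<in> M" "(xb, yb, b) \<in> M" by (auto simp: index_iff)
  have "u *\<^sub>R (xa, ya, a) + v *\<^sub>R (xb, yb, b) \<in> M"
    using convexD[OF assms A] \<open>0 \<le> u\<close> \<open>0 \<le> v\<close> \<open>u + v = 1\<close> by blast
  then show "u *\<^sub>R a + v *\<^sub>R b \<in> index_set M" by (auto simp: index_iff)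
qed

lemma ray_lemma:
  fixes C :: "'a::real_normed_vector set"
  assumes "closed C" "convex C" "w \<in> C" "\<And>t. t \<ge> 0 \<Longrightarrow> w + t *\<^sub>R r \<in> C"
    and "u \<in> C" "s \<ge> 0"
  shows "u + s *\<^sub>R r \<in> C"
proof -
  define c where "c n = (s / (s + 1)) * inverse (real (Suc n))" for n
  have c01: "0 \<le> c n" "c n \<le> 1" for n
  proof -
    show "0 \<le> c n" using assms(6) by (simp add: c_def)
    have h1: "s / (s + 1) \<le> 1" using assms(6) by auto
    have h2: "inverse (real (Suc n)) \<le> 1" by (simp add: inverse_le_1_iff)
    show "c n \<le> 1" unfolding c_def
      by (rule mult_le_one[OF h1 _ h2]) (simp add: assms(6))
  qed
  have cpos: "c n > 0" if "s > 0" for n using that by (simp add: c_def)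
  have lim: "c \<longlonglongrightarrow> 0" unfolding c_def
    by (intro tendsto_mult_right_zero LIMSEQ_inverse_real_of_nat)
  define p where "p n = u + s *\<^sub>R r + c n *\<^sub>R (w - u)" for n
  have pC: "p n \<in> C" for n
  proof (cases "s = 0")
    case True then show ?thesis using assms(5) by (simp add: p_def c_def)
  next
    case False
    then have sp: "s > 0" using assms(6) by simp
    have "(1 - c n) *\<^sub>R u + c n *\<^sub>R (w + (s / c n) *\<^sub>R r) \<in> C"
      using convexD_alt[OF assms(2) assms(5) assms(4)[of "s / c n"], of "c n"] c01[of n] cpos[OF sp, of n] sp
      by simp
    moreover have "(1 - c n) *\<^sub>R u + c n *\<^sub>R (w + (s / c n) *\<^sub>R r) = p n"
      using cpos[OF sp, of n] by (simp add: p_def algebra_simps)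
    ultimately show ?thesis by simp
  qed
  have "p \<longlonglongrightarrow> u + s *\<^sub>R r + 0 *\<^sub>R (w - u)"
    unfolding p_def by (intro tendsto_intros lim)
  then have "p \<longlonglongrightarrow> u + s *\<^sub>R r" by simp
  then show ?thesis using closed_sequentially[OF assms(1)] pC by blast
qed

lemma one_dir:
  fixes M :: "((real^'n) \<times> (real^'p) \<times> (real^'d)) set"
  assumes cM: "convex M" and zI: "z \<in> index_set M" and z'I: "z' \<in> rel_interior (index_set M)"
  shows "recession_cone (closure (z_projected M z)) \<subseteq> recession_cone (closure (z_projected M z'))"
proof
  fix r assume r: "r \<in> recession_cone (closure (z_projected M z))"
  have cI: "convex (index_set M)" using convex_index[OF cM] .
  obtain e where e: "e > 1" "(1 - e) *\<^sub>R z + e *\<^sub>R z' \<in> index_set M"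
    using convex_rel_interior_iff[OF cI] z'I zI by blast
  define z'' where "z'' = (1 - e) *\<^sub>R z + e *\<^sub>R z'"
  define \<mu> where "\<mu> = 1 - 1 / e"
  have mu: "0 < \<mu>" "\<mu> \<le> 1" using e(1) by (auto simp: \<mu>_def)
  have zz: "\<mu> *\<^sub>R z + (1 - \<mu>) *\<^sub>R z'' = z'"
    using e(1) by (simp add: \<mu>_def z''_def algebra_simps)
  obtain a b where ab: "(a, b, z'') \<in> M" using e(2) by (auto simp: index_iff z''_def)
  obtain x0 y0 where x0: "(x0, y0, z) \<in> M" using zI by (auto simp: index_iff)
  let ?A = "z_projected M z" and ?B = "z_projected M z'"
  define f where "f p = \<mu> *\<^sub>R p + (1 - \<mu>) *\<^sub>R a" for p
  have fAB: "f ` ?A \<subseteq> ?B"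
  proof
    fix q assume "q \<in> f ` ?A"
    then obtain p y where p: "q = f p" "(p, y, z) \<in> M" by (auto simp: zproj_iff)
    have "\<mu> *\<^sub>R (p, y, z) + (1 - \<mu>) *\<^sub>R (a, b, z'') \<in> M"
      using convexD_alt[OF cM p(2) ab, of "1 - \<mu>"] mu by simp
    then show "q \<in> ?B" using zz p(1) by (auto simp: zproj_iff f_def)
  qed
  have fcl: "f ` closure ?A \<subseteq> closure ?B"
  proof (rule image_closure_subset)
    show "continuous_on (closure ?A) f" unfolding f_def by (intro continuous_intros)
    show "closed (closure ?B)" by simp
    show "f ` ?A \<subseteq> closure ?B" using fAB closure_subset by blast
  qed
  have "x0 \<in> ?A" using x0 by (auto simp: zproj_iff)
  then have x0A: "x0 \<in> closure ?A" using closure_subset by blast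
  have raycl: "f x0 + t *\<^sub>R r \<in> closure ?B" if "t \<ge> 0" for t
  proof -
    have "x0 + (t / \<mu>) *\<^sub>R r \<in> closure ?A"
      using r x0A that mu by (auto simp: recession_cone_def)
    then have "f (x0 + (t / \<mu>) *\<^sub>R r) \<in> closure ?B" using fcl by blast
    moreover have "f (x0 + (t / \<mu>) *\<^sub>R r) = f x0 + t *\<^sub>R r"
      using mu by (simp add: f_def algebra_simps)
    ultimately show ?thesis by simp
  qed
  have fx0: "f x0 \<in> closure ?B" using raycl[of 0] by simp
  show "r \<in> recession_cone (closure ?B)"
    unfolding recession_cone_def
    using ray_lemma[OF closed_closure convex_closure[OF convex_zproj[OF cM]] fx0 raycl]
    by blast
qed

theorem proposition1:
  fixes M :: "((real^'n) \<times> (real^'p) \<times> (real^'d)) set"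
    and S :: "(real^'n) set"
  assumes "induces_MICP M S"
    and "z \<in> rel_interior (index_set M)"
    and "z' \<in> rel_interior (index_set M)"
  shows "recession_cone (closure (z_projected M z)) = recession_cone (closure (z_projected M z'))"
proof -
  have cM: "convex M" using assms(1) by (simp add: induces_MICP_def)
  show ?thesis
    using one_dir[OF cM rel_interior_subset[THEN subsetD, OF assms(2)] assms(3)]
      one_dir[OF cM rel_interior_subset[THEN subsetD, OF assms(3)] assms(2)] by blast
qed

end
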